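(* Let $\mathcal{S}$ be an $E$-unitary inverse semigroupoid, $X$ a partially ordered set, and $\theta=(\{X_s\}_{s\in\mathcal{S}},\{\theta_s\}_{s\in\mathcal{S}})$ an ordered global action of $\mathcal{S}$ on $X$. For $s\in\mathcal{S}$ put $D_{\pi_\sigma(s)}=\bigcup_{t:(s,t)\in\sigma}X_t$. Then: if $(s,t)\in\sigma$ and $x\in X_{s^*}\cap X_{t^*}$, then $\theta_s(x)=\theta_t(x)$; consequently $\alpha_{\pi_\sigma(s)}:D_{\pi_\sigma(s^* )}\to D_{\pi_\sigma(s)}$, $\alpha_{\pi_\sigma(s)}(x)=\theta_t(x)$ for any $t$ with $(s,t)\in\sigma$ and $x\in X_{t^*}$, is well defined, and $\alpha=(\{D_{\pi_\sigma(s)}\}_{s\in\mathcal{S}},\{\alpha_{\pi_\sigma(s)}\}_{s\in\mathcal{S}})$ is an ordered partial action of the groupoid $\mathcal{S}/\sigma$ on $X$ with $\alpha_{\pi_\sigma(s)}(x)=\theta_s(x)$ for all $x\in X_{s^*}$.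
   Context: Inverse semigroupoid: arrows $\mathcal{S}$, objects $\mathcal{S}^{(0)}$, maps $d,c$, associative multiplication on $\mathcal{S}^{(2)}=\{(s,t):d(s)=c(t)\}$ with $d(st)=d(t)$, $c(st)=c(s)$, unique $s^*$ with $ss^*s=s$, $s^*ss^*=s^*$; $E(\mathcal{S})$ = idempotents; natural order on parallel arrows $s\leqslant t$ iff $s=te$ for an idempotent $e$ with $(t,e)\in\mathcal{S}^{(2)}$. $(s,t)\in\sigma$ iff some $r\leqslant s,t$; $\sigma$ is a congruence (it relates only parallel arrows and is compatible with products), and $\mathcal{S}/\sigma$ is the groupoid whose arrows are $\sigma$-classes $\pi_\sigma(s)$, objects $\mathcal{S}^{(0)}$, $d(\pi_\sigma(s))=d(s)$, $c(\pi_\sigma(s))=c(s)$, $\pi_\sigma(s)\pi_\sigma(t)=\pi_\sigma(st)$, $\pi_\sigma(s)^*=\pi_\sigma(s^* )$. $\mathcal{S}$ is $E$-unitary if $(s,e)\in\sigma$ with $e$ idempotent implies $s$ idempotent. A partial action of $\mathcal{S}$ on a set $X$ is a pair $(\{X_s\},\{\theta_s\})$, $X_s\subseteq X$, $\theta_s:X_{s^*}\to X_s$, with: each $\theta_s$ bijective, $\theta_s^{-1}=\theta_{s^*}$, $X=\bigcup_sX_s$; $\theta_s\circ\theta_t\subseteq\theta_{st}$ as partial maps for $(s,t)\in\mathcal{S}^{(2)}$; $X_s\subseteq X_t$ if $s\leqslant t$. Global: $\theta_s\circ\theta_t=\theta_{st}$. Ordered (on a poset): each $X_s$ an order ideal and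 each $\theta_s$ an order isomorphism. *)

theory Defs
  imports Main
begin

text \<open>A semigroupoid is given by a set of arrows A, a set of objects A0, domain and
codomain maps d, c and a multiplication m, defined (meaningfully) on composable pairs
(s,t) with d s = c t.\<close>

definition inv_semigroupoid ::
  "'a set \<Rightarrow> 'o set \<Rightarrow> ('a \<Rightarrow> 'o) \<Rightarrow> ('a \<Rightarrow> 'o) \<Rightarrow> ('a \<Rightarrow> 'a \<Rightarrow> 'a) \<Rightarrow> bool" where
  "inv_semigroupoid A A0 d c m \<longleftrightarrow>
     (\<forall>s\<in>A. d s \<in> A0 \<and> c s \<in> A0) \<and>
     (\<forall>s\<in>A. \<forall>t\<in>A. d s = c t \<longrightarrow> m s t \<in> A \<and> d (m s t) = d t \<and> c (m s t) = c s) \<and>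
     (\<forall>r\<in>A. \<forall>s\<in>A. \<forall>t\<in>A. d r = c s \<longrightarrow> d s = c t \<longrightarrow> m (m r s) t = m r (m s t)) \<and>
     (\<forall>s\<in>A. \<exists>!u. u \<in> A \<and> d s = c u \<and> d u = c s \<and> m (m s u) s = s \<and> m (m u s) u = u)"

definition sinv :: "'a set \<Rightarrow> ('a \<Rightarrow> 'o) \<Rightarrow> ('a \<Rightarrow> 'o) \<Rightarrow> ('a \<Rightarrow> 'a \<Rightarrow> 'a) \<Rightarrow> 'a \<Rightarrow> 'a" where
  "sinv A d c m s = (THE u. u \<in> A \<and> d s = c u \<and> d u = c s \<and> m (m s u) s = s \<and> m (m u s) u = u)"

definition idem :: "'a set \<Rightarrow> ('a \<Rightarrow> 'o) \<Rightarrow> ('a \<Rightarrow> 'o) \<Rightarrow> ('a \<Rightarrow> 'a \<Rightarrow> 'a) \<Rightarrow> 'a \<Rightarrow> bool" where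
  "idem A d c m e \<longleftrightarrow> e \<in> A \<and> d e = c e \<and> m e e = e"

definition nleq :: "'a set \<Rightarrow> ('a \<Rightarrow> 'o) \<Rightarrow> ('a \<Rightarrow> 'o) \<Rightarrow> ('a \<Rightarrow> 'a \<Rightarrow> 'a) \<Rightarrow> 'a \<Rightarrow> 'a \<Rightarrow> bool" where
  "nleq A d c m s t \<longleftrightarrow> s \<in> A \<and> t \<in> A \<and> d s = d t \<and> c s = c t \<and>
     (\<exists>e. idem A d c m e \<and> d t = c e \<and> s = m t e)"

definition sigma :: "'a set \<Rightarrow> ('a \<Rightarrow> 'o) \<Rightarrow> ('a \<Rightarrow> 'o) \<Rightarrow> ('a \<Rightarrow> 'a \<Rightarrow> 'a) \<Rightarrow> 'a \<Rightarrow> 'a \<Rightarrow> bool" where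
  "sigma A d c m s t \<longleftrightarrow> (\<exists>r. nleq A d c m r s \<and> nleq A d c m r t)"

definition E_unitary :: "'a set \<Rightarrow> ('a \<Rightarrow> 'o) \<Rightarrow> ('a \<Rightarrow> 'o) \<Rightarrow> ('a \<Rightarrow> 'a \<Rightarrow> 'a) \<Rightarrow> bool" where
  "E_unitary A d c m \<longleftrightarrow>
     (\<forall>s\<in>A. \<forall>e. idem A d c m e \<and> sigma A d c m s e \<longrightarrow> idem A d c m s)"

definition sclass :: "'a set \<Rightarrow> ('a \<Rightarrow> 'o) \<Rightarrow> ('a \<Rightarrow> 'o) \<Rightarrow> ('a \<Rightarrow> 'a \<Rightarrow> 'a) \<Rightarrow> 'a \<Rightarrow> 'a set" where
  "sclass A d c m s = {t. sigma A d c m s t}"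

definition q_arrows :: "'a set \<Rightarrow> ('a \<Rightarrow> 'o) \<Rightarrow> ('a \<Rightarrow> 'o) \<Rightarrow> ('a \<Rightarrow> 'a \<Rightarrow> 'a) \<Rightarrow> 'a set set" where
  "q_arrows A d c m = sclass A d c m ` A"

definition q_d :: "('a \<Rightarrow> 'o) \<Rightarrow> 'a set \<Rightarrow> 'o" where
  "q_d d P = d (SOME s. s \<in> P)"

definition q_mult :: "'a set \<Rightarrow> ('a \<Rightarrow> 'o) \<Rightarrow> ('a \<Rightarrow> 'o) \<Rightarrow> ('a \<Rightarrow> 'a \<Rightarrow> 'a) \<Rightarrow> 'a set \<Rightarrow> 'a set \<Rightarrow> 'a set" where
  "q_mult A d c m P Q = sclass A d c m (m (SOME s. s \<in> P) (SOME t. t \<in> Q))"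

definition q_inv :: "'a set \<Rightarrow> ('a \<Rightarrow> 'o) \<Rightarrow> ('a \<Rightarrow> 'o) \<Rightarrow> ('a \<Rightarrow> 'a \<Rightarrow> 'a) \<Rightarrow> 'a set \<Rightarrow> 'a set" where
  "q_inv A d c m P = sclass A d c m (sinv A d c m (SOME s. s \<in> P))"

text \<open>Partial action of a semigroupoid (arrows A, maps d c, product m, inverse map iv;
the natural order is derived from m) on a set X. Xs s is the set X_s, th s is theta_s.\<close>

definition partial_action ::
  "'a set \<Rightarrow> ('a \<Rightarrow> 'o) \<Rightarrow> ('a \<Rightarrow> 'o) \<Rightarrow> ('a \<Rightarrow> 'a \<Rightarrow> 'a) \<Rightarrow> ('a \<Rightarrow> 'a) \<Rightarrow>
   'x set \<Rightarrow> ('a \<Rightarrow> 'x set) \<Rightarrow> ('a \<Rightarrow> 'x \<Rightarrow> 'x) \<Rightarrow> bool" where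
  "partial_action A d c m iv X Xs th \<longleftrightarrow>
     (\<forall>s\<in>A. Xs s \<subseteq> X \<and> bij_betw (th s) (Xs (iv s)) (Xs s)) \<and>
     (\<forall>s\<in>A. (\<forall>x\<in>Xs (iv s). th (iv s) (th s x) = x) \<and> (\<forall>x\<in>Xs s. th s (th (iv s) x) = x)) \<and>
     X = (\<Union>s\<in>A. Xs s) \<and>
     (\<forall>s\<in>A. \<forall>t\<in>A. d s = c t \<longrightarrow>
        (\<forall>x. x \<in> Xs (iv t) \<and> th t x \<in> Xs (iv s) \<longrightarrow>
              x \<in> Xs (iv (m s t)) \<and> th (m s t) x = th s (th t x))) \<and>
     (\<forall>s t. nleq A d c m s t \<longrightarrow> Xs s \<subseteq> Xs t)"

definition global_action ::
  "'a set \<Rightarrow> ('a \<Rightarrow> 'o) \<Rightarrow> ('a \<Rightarrow> 'o) \<Rightarrow> ('a \<Rightarrow> 'a \<Rightarrow> 'a) \<Rightarrow> ('a \<Rightarrow> 'a) \<Rightarrow>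
   'x set \<Rightarrow> ('a \<Rightarrow> 'x set) \<Rightarrow> ('a \<Rightarrow> 'x \<Rightarrow> 'x) \<Rightarrow> bool" where
  "global_action A d c m iv X Xs th \<longleftrightarrow>
     partial_action A d c m iv X Xs th \<and>
     (\<forall>s\<in>A. \<forall>t\<in>A. d s = c t \<longrightarrow>
        (\<forall>x. x \<in> Xs (iv (m s t)) \<longleftrightarrow> x \<in> Xs (iv t) \<and> th t x \<in> Xs (iv s)))"

definition order_ideal :: "'x::order set \<Rightarrow> 'x set \<Rightarrow> bool" where
  "order_ideal X Y \<longleftrightarrow> Y \<subseteq> X \<and> (\<forall>y\<in>Y. \<forall>x\<in>X. x \<le> y \<longrightarrow> x \<in> Y)"

definition order_iso_on :: "('x::order \<Rightarrow> 'x) \<Rightarrow> 'x set \<Rightarrow> 'x set \<Rightarrow> bool" where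
  "order_iso_on f Y Z \<longleftrightarrow> bij_betw f Y Z \<and> (\<forall>x\<in>Y. \<forall>y\<in>Y. x \<le> y \<longleftrightarrow> f x \<le> f y)"

definition ordered_action ::
  "'a set \<Rightarrow> ('a \<Rightarrow> 'a) \<Rightarrow> 'x::order set \<Rightarrow> ('a \<Rightarrow> 'x set) \<Rightarrow> ('a \<Rightarrow> 'x \<Rightarrow> 'x) \<Rightarrow> bool" where
  "ordered_action A iv X Xs th \<longleftrightarrow>
     (\<forall>s\<in>A. order_ideal X (Xs s) \<and> order_iso_on (th s) (Xs (iv s)) (Xs s))"

definition alphaD :: "('a \<Rightarrow> 'x set) \<Rightarrow> 'a set \<Rightarrow> 'x set" where
  "alphaD Xs P = (\<Union>t\<in>P. Xs t)"

definition alphaMap :: "'a set \<Rightarrow> ('a \<Rightarrow> 'o) \<Rightarrow> ('a \<Rightarrow> 'o) \<Rightarrow> ('a \<Rightarrow> 'a \<Rightarrow> 'a) \<Rightarrow>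
    ('a \<Rightarrow> 'x set) \<Rightarrow> ('a \<Rightarrow> 'x \<Rightarrow> 'x) \<Rightarrow> 'a set \<Rightarrow> 'x \<Rightarrow> 'x" where
  "alphaMap A d c m Xs th P x = th (SOME t. t \<in> P \<and> x \<in> Xs (sinv A d c m t)) x"

end

theory Submission
  imports Defs
begin

locale isg =
  fixes S :: "'a set" and S0 :: "'o set" and d c :: "'a \<Rightarrow> 'o" and m :: "'a \<Rightarrow> 'a \<Rightarrow> 'a"
  assumes isg: "inv_semigroupoid S S0 d c m"
begin

abbreviation "iv \<equiv> sinv S d c m"
abbreviation "ide \<equiv> idem S d c m"

lemma m_in[simp]: "s\<in>S \<Longrightarrow> t\<in>S \<Longrightarrow> d s = c t \<Longrightarrow> m s t \<in> S"
  using isg unfolding inv_semigroupoid_def by blast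
lemma d_m[simp]: "s\<in>S \<Longrightarrow> t\<in>S \<Longrightarrow> d s = c t \<Longrightarrow> d (m s t) = d t"
  using isg unfolding inv_semigroupoid_def by blast
lemma c_m[simp]: "s\<in>S \<Longrightarrow> t\<in>S \<Longrightarrow> d s = c t \<Longrightarrow> c (m s t) = c s"
  using isg unfolding inv_semigroupoid_def by blast
lemma assoc[simp]: "r\<in>S \<Longrightarrow> s\<in>S \<Longrightarrow> t\<in>S \<Longrightarrow> d r = c s \<Longrightarrow> d s = c t \<Longrightarrow> m (m r s) t = m r (m s t)"
  using isg unfolding inv_semigroupoid_def by blast

lemma inv: assumes "s\<in>S" shows "iv s \<in> S \<and> d s = c (iv s) \<and> d (iv s) = c s \<and> m (m s (iv s)) s = s \<and> m (m (iv s) s) (iv s) = iv s"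
proof -
  have "\<exists>!u. u \<in> S \<and> d s = c u \<and> d u = c s \<and> m (m s u) s = s \<and> m (m u s) u = u"
    using isg assms unfolding inv_semigroupoid_def by blast
  then show ?thesis unfolding sinv_def by (rule theI')
qed

lemma iv_in[simp]: "s\<in>S \<Longrightarrow> iv s \<in> S" using inv by blast
lemma c_iv[simp]: "s\<in>S \<Longrightarrow> c (iv s) = d s" using inv by metis
lemma d_iv[simp]: "s\<in>S \<Longrightarrow> d (iv s) = c s" using inv by metis
lemma sss[simp]: "s\<in>S \<Longrightarrow> m s (m (iv s) s) = s"
proof -
  assume s: "s\<in>S"
  have "m (m s (iv s)) s = s" using inv[OF s] by blast
  then show ?thesis using s by simp
qed
lemma sss'[simp]: "s\<in>S \<Longrightarrow> m (iv s) (m s (iv s)) = iv s"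
proof -
  assume s: "s\<in>S"
  have "m (m (iv s) s) (iv s) = iv s" using inv[OF s] by blast
  then show ?thesis using s by simp
qed
lemma sssx[simp]: "s\<in>S \<Longrightarrow> x\<in>S \<Longrightarrow> d s = c x \<Longrightarrow> m s (m (iv s) (m s x)) = m s x"
proof -
  assume a: "s\<in>S" "x\<in>S" "d s = c x"
  have "m s (m (iv s) (m s x)) = m (m s (m (iv s) s)) x" using a by (simp del: sss)
  then show ?thesis using a by simp
qed
lemma sssx'[simp]: "s\<in>S \<Longrightarrow> x\<in>S \<Longrightarrow> c s = c x \<Longrightarrow> m (iv s) (m s (m (iv s) x)) = m (iv s) x"
proof -
  assume a: "s\<in>S" "x\<in>S" "c s = c x"
  have "m (iv s) (m s (m (iv s) x)) = m (m (iv s) (m s (iv s))) x" using a by (simp del: sss')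
  then show ?thesis using a by simp
qed

lemma inv_unique: assumes "s\<in>S" "u\<in>S" "d s = c u" "d u = c s" "m (m s u) s = s" "m (m u s) u = u"
  shows "u = iv s"
proof -
  have ex: "\<exists>!u. u \<in> S \<and> d s = c u \<and> d u = c s \<and> m (m s u) s = s \<and> m (m u s) u = u"
    using isg assms(1) unfolding inv_semigroupoid_def by blast
  show ?thesis unfolding sinv_def
    by (rule sym, rule the1_equality[OF ex]) (use assms in blast)
qed

lemma iv_iv[simp]: "s\<in>S \<Longrightarrow> iv (iv s) = s"
  by (rule sym, rule inv_unique) auto

lemma ideD: "ide e \<Longrightarrow> e \<in> S \<and> d e = c e \<and> m e e = e" unfolding idem_def by blast
lemma ideI: "e \<in> S \<Longrightarrow> d e = c e \<Longrightarrow> m e e = e \<Longrightarrow> ide e" unfolding idem_def by blast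

lemma ide_S: "ide e \<Longrightarrow> e \<in> S" using ideD by blast
lemma ide_dc: "ide e \<Longrightarrow> d e = c e" using ideD by blast
lemma ide_ee[simp]: "ide e \<Longrightarrow> m e e = e" using ideD by blast
lemma ide_left[simp]: "ide e \<Longrightarrow> z\<in>S \<Longrightarrow> d e = c z \<Longrightarrow> m e (m e z) = m e z"
proof -
  assume a: "ide e" "z\<in>S" "d e = c z"
  have "m e (m e z) = m (m e e) z" by (rule assoc[symmetric]) (use a ideD[OF a(1)] in auto)
  then show ?thesis using a by simp
qed

lemma iv_ide: assumes "ide e" shows "iv e = e"
  using ideD[OF assms] by (intro sym[OF inv_unique]) auto

lemma ide_prod: assumes e: "ide e" and f: "ide f" and ef: "d e = c f" shows "ide (m e f)"
proof -
  note E = ideD[OF e] and F = ideD[OF f]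
  define x where "x = iv (m e f)"
  have eS: "e\<in>S" and fS: "f\<in>S" using E F by auto
  have efS: "m e f \<in> S" using eS fS ef by simp
  have xS: "x\<in>S" using efS x_def by simp
  have dx: "d x = c e" "c x = d f" using efS eS fS ef x_def by auto
  define y where "y = m f (m x e)"
  have yS: "y \<in> S" using y_def xS eS fS dx E F by simp
  have h1: "m (m x (m e f)) x = x" "m (m (m e f) x) (m e f) = m e f" using inv[OF efS] unfolding x_def by blast+
  have xefx: "m x (m e (m f x)) = x" using eS fS ef dx xS h1(1) by simp
  have xefx': "m x (m e (m f (m x e))) = m x e"
  proof -
    have "m x (m e (m f (m x e))) = m (m x (m e (m f x))) e" using xS eS fS ef dx E by simp
    then show ?thesis using xefx by simp
  qed
  have efxef: "m e (m f (m x (m e f))) = m e f" using eS fS ef dx xS h1(2) by simp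
  have yy: "m y y = y"
  proof -
    have "m y y = m f (m (m x (m e (m f x))) e)" unfolding y_def using xS eS fS dx E F ef by simp
    then show ?thesis using xefx y_def by simp
  qed
  have dy: "d y = d e" "c y = c f" unfolding y_def using xS eS fS dx E F ef by auto
  have 1: "m (m (m e f) y) (m e f) = m e f" unfolding y_def using xS eS fS dx e f E F ef efxef by simp
  have 2: "m (m y (m e f)) y = y" unfolding y_def using xS eS fS dx e f E F ef xefx' by simp
  have "y = x" unfolding x_def
    apply (rule inv_unique) using 1 2 yS efS dy ef eS fS E F by auto
  then have xx: "m x x = x" using yy by simp
  have "ide x" using xx xS dx E F ef by (intro ideI) auto
  then have "iv x = x" by (rule iv_ide)
  then have "m e f = x" using x_def efS by (metis iv_iv)
  then show ?thesis using \<open>ide x\<close> by simp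
qed

lemma ide_comm: assumes e: "ide e" and f: "ide f" and ef: "d e = c f" shows "m e f = m f e"
proof -
  note E = ideD[OF e] and F = ideD[OF f]
  have I: "ide (m e f)" using ide_prod assms .
  have eS: "e\<in>S" and fS: "f\<in>S" using E F by auto
  have efef: "m e (m f (m e f)) = m e f"
  proof -
    have "m (m e f) (m e f) = m e f" using I by simp
    then show ?thesis using eS fS ef E F by simp
  qed
  have I2: "ide (m f e)" using ide_prod f e E F ef by simp
  have fefe: "m f (m e (m f e)) = m f e"
  proof -
    have "m (m f e) (m f e) = m f e" using I2 by simp
    then show ?thesis using eS fS ef E F by simp
  qed
  have "m f e = iv (m e f)"
    apply (rule inv_unique) using eS fS ef E F e f efef fefe by auto
  then show ?thesis using iv_ide[OF I] by simp
qed

lemma comm_ext: assumes a: "ide a" and b: "ide b" and ab: "d a = c b" and z: "z\<in>S" "d b = c z"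
  shows "m a (m b z) = m b (m a z)"
proof -
  note A = ideD[OF a] and B = ideD[OF b]
  have "m a b = m b a" using ide_comm a b ab .
  then have "m (m a b) z = m (m b a) z" by simp
  then show ?thesis using A B ab z by simp
qed

lemma ss_ide: "s\<in>S \<Longrightarrow> ide (m (iv s) s)" "s\<in>S \<Longrightarrow> ide (m s (iv s))"
  by (auto intro!: ideI)

lemma iv_m: assumes s: "s\<in>S" and t: "t\<in>S" and st: "d s = c t"
  shows "iv (m s t) = m (iv t) (iv s)"
proof (rule sym, rule inv_unique)
  have I1: "m (m t (iv t)) (m (m (iv s) s) t) = m (m (iv s) s) (m (m t (iv t)) t)"
    by (rule comm_ext) (use s t st ss_ide in auto)
  have I1': "m t (m (iv t) (m (iv s) (m s t))) = m (iv s) (m s t)" using I1 s t st by simp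
  have I2: "m (m (iv s) s) (m (m t (iv t)) (iv s)) = m (m t (iv t)) (m (m (iv s) s) (iv s))"
    by (rule comm_ext) (use s t st ss_ide in auto)
  have I2': "m (iv s) (m s (m t (m (iv t) (iv s)))) = m t (m (iv t) (iv s))" using I2 s t st by simp
  show "m (m (m s t) (m (iv t) (iv s))) (m s t) = m s t" using s t st I1' by simp
  show "m (m (m (iv t) (iv s)) (m s t)) (m (iv t) (iv s)) = m (iv t) (iv s)" using s t st I2' by simp
qed (use s t st in auto)

lemma shift: assumes f: "ide f" and x: "x\<in>S" and fx: "d f = c x"
  shows "m f x = m x (m (iv x) (m f x))" "ide (m (iv x) (m f x))"
proof -
  note F = ideD[OF f]
  have I: "m (m x (iv x)) (m f x) = m f (m (m x (iv x)) x)"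
    by (rule comm_ext) (use f x fx F ss_ide in auto)
  show a: "m f x = m x (m (iv x) (m f x))" using I f x fx F by simp
  show "ide (m (iv x) (m f x))"
  proof (rule ideI)
    show "m (iv x) (m f x) \<in> S" using x F fx by simp
    show "d (m (iv x) (m f x)) = c (m (iv x) (m f x))" using x F fx by simp
    have "m (m (iv x) (m f x)) (m (iv x) (m f x)) = m (iv x) (m f (m x (m (iv x) (m f x))))"
      using x F fx by simp
    also have "\<dots> = m (iv x) (m f x)" using a[symmetric] x F fx f by simp
    finally show "m (m (iv x) (m f x)) (m (iv x) (m f x)) = m (iv x) (m f x)" .
  qed
qed

end

locale ctx = isg S S0 d c m for S :: "'a set" and S0 :: "'o set" and d c :: "'a \<Rightarrow> 'o" and m +
  assumes eun: "E_unitary S d c m"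
begin

abbreviation "leq \<equiv> nleq S d c m"
abbreviation "sg \<equiv> sigma S d c m"

lemma leq_def': "leq r s \<longleftrightarrow> r \<in> S \<and> s \<in> S \<and> d r = d s \<and> c r = c s \<and> (\<exists>e. ide e \<and> d s = c e \<and> r = m s e)"
  unfolding nleq_def by blast

lemma leqI: "s\<in>S \<Longrightarrow> ide e \<Longrightarrow> d s = c e \<Longrightarrow> leq (m s e) s"
  unfolding leq_def' using ideD by fastforce

lemma eu: assumes "ide e" "leq e b" shows "ide b"
proof -
  have "leq e e" using leqI[of e e] assms(1) ideD[OF assms(1)] by simp
  then have "sg b e" unfolding sigma_def using assms(2) by blast
  moreover have "b\<in>S" using assms(2) unfolding leq_def' by blast
  ultimately show ?thesis using eun assms(1) unfolding E_unitary_def by blast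
qed

lemma sg_char: "sg s t \<longleftrightarrow> s\<in>S \<and> t\<in>S \<and> d s = d t \<and> c s = c t \<and> ide (m (iv s) t)"
proof
  assume "sg s t"
  then obtain r where r: "leq r s" "leq r t" unfolding sigma_def by blast
  then obtain e1 e2 where e: "ide e1" "d s = c e1" "r = m s e1" "ide e2" "d t = c e2" "r = m t e2"
    and st: "s\<in>S" "t\<in>S" "d s = d t" "c s = c t" unfolding leq_def' by metis
  note E1 = ideD[OF e(1)] and E2 = ideD[OF e(4)]
  have "ide (m (m (iv s) s) e1)" by (rule ide_prod) (use st e ss_ide in auto)
  moreover have "m (m (iv s) s) e1 = m (m (iv s) t) e2"
  proof -
    have "m (m (iv s) s) e1 = m (iv s) r" using e st E1 by simp
    also have "\<dots> = m (m (iv s) t) e2" using e st E2 by simp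
    finally show ?thesis .
  qed
  moreover have "leq (m (m (iv s) t) e2) (m (iv s) t)" by (rule leqI) (use st e E2 in auto)
  ultimately have "ide (m (iv s) t)" using eu by metis
  then show "s\<in>S \<and> t\<in>S \<and> d s = d t \<and> c s = c t \<and> ide (m (iv s) t)" using st by blast
next
  assume a: "s\<in>S \<and> t\<in>S \<and> d s = d t \<and> c s = c t \<and> ide (m (iv s) t)"
  then have s: "s\<in>S" and t: "t\<in>S" and dd: "d s = d t" and cc: "c s = c t" and e: "ide (m (iv s) t)" by auto
  have l1: "leq (m s (m (iv s) t)) s" by (rule leqI) (use s t cc e in auto)
  have sh: "m (m s (iv s)) t = m t (m (iv t) (m (m s (iv s)) t))" "ide (m (iv t) (m (m s (iv s)) t))"
    by (rule shift; use s t cc ss_ide in auto)+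
  have eq: "m s (m (iv s) t) = m t (m (iv t) (m (m s (iv s)) t))" using sh(1) s t cc by simp
  have l2: "leq (m t (m (iv t) (m (m s (iv s)) t))) t" by (rule leqI) (use s t cc sh in auto)
  show "sg s t" unfolding sigma_def using l1 l2 eq by metis
qed

lemma sg_sym: "sg s t \<Longrightarrow> sg t s" unfolding sigma_def by blast

lemma sg_refl: "s\<in>S \<Longrightarrow> sg s s" unfolding sg_char using ss_ide by auto

lemma sg_S: "sg s t \<Longrightarrow> s\<in>S \<and> t\<in>S \<and> d s = d t \<and> c s = c t" unfolding sg_char by blast

lemma sg_trans: assumes "sg s t" "sg t u" shows "sg s u"
proof -
  from assms have s: "s\<in>S" and t: "t\<in>S" and u: "u\<in>S" and dd: "d s = d t" "d t = d u"
    and cc: "c s = c t" "c t = c u" and e: "ide (m (iv s) t)" and f: "ide (m (iv t) u)"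
    unfolding sg_char by auto
  have ef: "ide (m (m (iv s) t) (m (iv t) u))" by (rule ide_prod) (use e f s t u dd cc in auto)
  have sh: "m (m t (iv t)) u = m u (m (iv u) (m (m t (iv t)) u))" "ide (m (iv u) (m (m t (iv t)) u))"
    by (rule shift; use s t u cc ss_ide in auto)+
  have eq: "m (m (iv s) t) (m (iv t) u) = m (m (iv s) u) (m (iv u) (m (m t (iv t)) u))"
    using sh(1) s t u dd cc by simp
  have "leq (m (m (iv s) u) (m (iv u) (m (m t (iv t)) u))) (m (iv s) u)"
    by (rule leqI) (use s t u dd cc sh in auto)
  then have "ide (m (iv s) u)" using eu ef eq by metis
  then show ?thesis unfolding sg_char using s u dd cc by auto
qed

lemma sg_cong: assumes "sg s t" "sg u v" "d s = c u" shows "sg (m s u) (m t v)"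
proof -
  from assms have s: "s\<in>S" and t: "t\<in>S" and u: "u\<in>S" and v: "v\<in>S" and dd: "d s = d t" "d u = d v"
    and cc: "c s = c t" "c u = c v" and e: "ide (m (iv s) t)" and f: "ide (m (iv u) v)" and su: "d s = c u"
    unfolding sg_char by auto
  have sh: "m (m (iv s) t) v = m v (m (iv v) (m (m (iv s) t) v))" "ide (m (iv v) (m (m (iv s) t) v))"
    by (rule shift; use e s t u v dd cc su in auto)+
  have P: "ide (m (m (iv u) v) (m (iv v) (m (m (iv s) t) v)))"
    by (rule ide_prod) (use f sh s t u v dd cc su in auto)
  have eq: "m (iv (m s u)) (m t v) = m (m (iv u) v) (m (iv v) (m (m (iv s) t) v))"
  proof -
    have "m (iv (m s u)) (m t v) = m (iv u) (m (m (iv s) t) v)" using iv_m s t u v dd cc su by simp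
    also have "\<dots> = m (iv u) (m v (m (iv v) (m (m (iv s) t) v)))" using sh(1) by simp
    also have "\<dots> = m (m (iv u) v) (m (iv v) (m (m (iv s) t) v))" using s t u v dd cc su by simp
    finally show ?thesis .
  qed
  show ?thesis unfolding sg_char using P eq s t u v dd cc su by simp
qed

lemma sg_iv: assumes "sg s t" shows "sg (iv s) (iv t)"
proof -
  from assms have s: "s\<in>S" and t: "t\<in>S" and dd: "d s = d t"
    and cc: "c s = c t" and e: "ide (m (iv s) t)"
    unfolding sg_char by auto
  have P: "ide (m (m s (iv s)) (m t (iv t)))" by (rule ide_prod) (use s t dd cc ss_ide in auto)
  have sh: "m (m (iv s) t) (iv t) = m (iv t) (m (iv (iv t)) (m (m (iv s) t) (iv t)))"
      "ide (m (iv (iv t)) (m (m (iv s) t) (iv t)))"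
    by (rule shift; use e s t dd cc in auto)+
  have eq: "m (m s (iv s)) (m t (iv t)) = m (m s (iv t)) (m t (m (m (iv s) t) (iv t)))"
  proof -
    have "m (m s (iv s)) (m t (iv t)) = m s (m (m (iv s) t) (iv t))" using s t dd cc by simp
    also have "\<dots> = m s (m (iv t) (m t (m (m (iv s) t) (iv t))))" using sh(1) t by simp
    also have "\<dots> = m (m s (iv t)) (m t (m (m (iv s) t) (iv t)))" using s t dd cc by simp
    finally show ?thesis .
  qed
  have "leq (m (m s (iv t)) (m t (m (m (iv s) t) (iv t)))) (m s (iv t))"
    by (rule leqI) (use s t dd cc sh in auto)
  then have "ide (m s (iv t))" using eu P eq by metis
  then show ?thesis unfolding sg_char using s t dd cc by auto
qed

lemma eu2: "s\<in>S \<Longrightarrow> ide e \<Longrightarrow> sg s e \<Longrightarrow> ide s"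
  using eun unfolding E_unitary_def by blast

lemma leq_sg: assumes "leq r s" shows "sg r s"
proof -
  have r: "r\<in>S" using assms unfolding leq_def' by blast
  have "leq (m r (m (iv r) r)) r" by (rule leqI) (use r ss_ide in auto)
  then have "leq r r" using r by simp
  then show ?thesis unfolding sigma_def using assms by blast
qed

lemma sclass_eq: "sg s t \<Longrightarrow> sclass S d c m s = sclass S d c m t"
  unfolding sclass_def using sg_trans sg_sym by blast

lemma some_in: assumes "s\<in>S" shows "sg s (SOME t. t \<in> sclass S d c m s)"
proof -
  have "s \<in> sclass S d c m s" unfolding sclass_def using sg_refl assms by simp
  then have "(SOME t. t \<in> sclass S d c m s) \<in> sclass S d c m s" by (rule someI)
  then show ?thesis unfolding sclass_def by simp
qed

lemma q_d_cl: "s\<in>S \<Longrightarrow> q_d d (sclass S d c m s) = d s" "s\<in>S \<Longrightarrow> q_d c (sclass S d c m s) = c s"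
  unfolding q_d_def using some_in sg_S by metis+

lemma q_inv_cl: "s\<in>S \<Longrightarrow> q_inv S d c m (sclass S d c m s) = sclass S d c m (iv s)"
  unfolding q_inv_def using some_in sg_iv sclass_eq sg_sym by metis

lemma q_mult_cl: assumes "s\<in>S" "t\<in>S" "d s = c t"
  shows "q_mult S d c m (sclass S d c m s) (sclass S d c m t) = sclass S d c m (m s t)"
proof -
  have "sg (m s t) (m (SOME x. x \<in> sclass S d c m s) (SOME x. x \<in> sclass S d c m t))"
    using sg_cong some_in assms by blast
  then show ?thesis unfolding q_mult_def using sclass_eq sg_sym by metis
qed

end

locale ctx2 = ctx S S0 d c m for S :: "'a set" and S0 :: "'o set" and d c :: "'a \<Rightarrow> 'o" and m +
  fixes X :: "'x::order set" and Xs :: "'a \<Rightarrow> 'x set" and th :: "'a \<Rightarrow> 'x \<Rightarrow> 'x"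
  assumes ga: "global_action S d c m (sinv S d c m) X Xs th"
    and oa: "ordered_action S (sinv S d c m) X Xs th"
begin

abbreviation "al \<equiv> alphaMap S d c m Xs th"
abbreviation "D \<equiv> alphaD Xs"
abbreviation "cl \<equiv> sclass S d c m"

lemma PA: "partial_action S d c m iv X Xs th" using ga unfolding global_action_def by blast

lemma Xs_X: "s\<in>S \<Longrightarrow> Xs s \<subseteq> X" using PA unfolding partial_action_def by blast
lemma bij: "s\<in>S \<Longrightarrow> bij_betw (th s) (Xs (iv s)) (Xs s)" using PA unfolding partial_action_def by blast
lemma th_maps: "s\<in>S \<Longrightarrow> x \<in> Xs (iv s) \<Longrightarrow> th s x \<in> Xs s" using bij bij_betw_apply by metis
lemma th_inv1: "s\<in>S \<Longrightarrow> x \<in> Xs (iv s) \<Longrightarrow> th (iv s) (th s x) = x" using PA unfolding partial_action_def by blast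
lemma th_inv2: "s\<in>S \<Longrightarrow> x \<in> Xs s \<Longrightarrow> th s (th (iv s) x) = x" using PA unfolding partial_action_def by blast
lemma X_un: "X = (\<Union>s\<in>S. Xs s)" using PA unfolding partial_action_def by blast
lemma comp: "s\<in>S \<Longrightarrow> t\<in>S \<Longrightarrow> d s = c t \<Longrightarrow> x \<in> Xs (iv t) \<Longrightarrow> th t x \<in> Xs (iv s) \<Longrightarrow>
   x \<in> Xs (iv (m s t)) \<and> th (m s t) x = th s (th t x)" using PA unfolding partial_action_def by blast
lemma glob: "s\<in>S \<Longrightarrow> t\<in>S \<Longrightarrow> d s = c t \<Longrightarrow> x \<in> Xs (iv (m s t)) \<longleftrightarrow> x \<in> Xs (iv t) \<and> th t x \<in> Xs (iv s)"
  using ga unfolding global_action_def by blast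
lemma oideal: "s\<in>S \<Longrightarrow> order_ideal X (Xs s)" using oa unfolding ordered_action_def by blast
lemma oiso: "s\<in>S \<Longrightarrow> order_iso_on (th s) (Xs (iv s)) (Xs s)" using oa unfolding ordered_action_def by blast

lemma ide_id: assumes e: "ide e" and x: "x \<in> Xs e" shows "th e x = x"
proof -
  note E = ideD[OF e]
  have ie: "iv e = e" using iv_ide e .
  have x': "x \<in> Xs (iv e)" using x ie by simp
  have tx: "th e x \<in> Xs e" using th_maps E x' by blast
  have "th (m e e) x = th e (th e x)" using comp[of e e x] E x' tx ie by simp
  then have "th e x = th e (th e x)" using E by simp
  moreover have "inj_on (th e) (Xs (iv e))" using bij E bij_betw_def by blast
  ultimately show ?thesis using x' tx ie unfolding inj_on_def by metis
qed

lemma part1: assumes st: "sg s t" and xs: "x \<in> Xs (iv s)" and xt: "x \<in> Xs (iv t)"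
  shows "th s x = th t x"
proof -
  from st have s: "s\<in>S" and t: "t\<in>S" and dd: "d s = d t" and cc: "c s = c t" and e: "ide (m (iv s) t)"
    unfolding sg_char by auto
  have f: "ide (m s (iv t))" using sg_iv[OF st] s unfolding sg_char by auto
  define a where "a = m (iv s) s"
  define b where "b = m (iv t) t"
  have a: "ide a" "iv a = a" unfolding a_def using ss_ide iv_ide s by auto
  have b: "ide b" "iv b = b" unfolding b_def using ss_ide iv_ide t by auto
  have xa: "x \<in> Xs a"
    using glob[of "iv s" s x] s xs th_maps[OF s xs] a(2) unfolding a_def by simp
  have xb: "x \<in> Xs b"
    using glob[of "iv t" t x] t xt th_maps[OF t xt] b(2) unfolding b_def by simp
  have xab: "x \<in> Xs (iv (m a b))"
    using glob[of a b x] a b xa xb ide_id[OF b(1) xb] s t dd unfolding a_def b_def by simp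
  have fi: "m s (iv t) = m t (iv s)"
    using iv_ide[OF f] iv_m[of s "iv t"] s t dd by simp
  have "m a b = m (iv s) (m (m s (iv t)) t)" unfolding a_def b_def using s t dd cc by simp
  also have "\<dots> = m (iv s) (m (m t (iv s)) t)" using fi by simp
  also have "\<dots> = m (m (iv s) t) (m (iv s) t)" using s t dd cc by simp
  also have "\<dots> = m (iv s) t" using e by simp
  finally have ab: "m a b = m (iv s) t" .
  have xe: "x \<in> Xs (iv (m (iv s) t))" using xab ab by simp
  have g: "th t x \<in> Xs s" using glob[of "iv s" t x] xe s t cc by simp
  have "th (m (iv s) t) x = th (iv s) (th t x)" using comp[of "iv s" t x] g xt s t cc by simp
  moreover have "th (m (iv s) t) x = x" using ide_id[OF e] xe iv_ide[OF e] by simp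
  ultimately have "th (iv s) (th t x) = x" by simp
  then have "th s x = th s (th (iv s) (th t x))" by simp
  also have "\<dots> = th t x" using th_inv2 s g by blast
  finally show ?thesis .
qed

lemma part2: assumes s: "s\<in>S" and st: "sg s t" and x: "x \<in> Xs (iv t)"
  shows "al (cl s) x = th t x"
proof -
  define t' where "t' = (SOME t'. t' \<in> cl s \<and> x \<in> Xs (iv t'))"
  have "t \<in> cl s \<and> x \<in> Xs (iv t)" using st x unfolding sclass_def by simp
  then have "t' \<in> cl s \<and> x \<in> Xs (iv t')" unfolding t'_def by (rule someI)
  then have "sg t' t" "x \<in> Xs (iv t')" unfolding sclass_def using sg_sym sg_trans st by blast+
  then have "th t' x = th t x" using part1 x by blast
  then show ?thesis unfolding alphaMap_def t'_def[symmetric] .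
qed

lemma memD: "x \<in> D (cl s) \<longleftrightarrow> (\<exists>t. sg s t \<and> x \<in> Xs t)"
  unfolding alphaD_def sclass_def by blast

lemma memDi: assumes s: "s\<in>S" shows "x \<in> D (cl (iv s)) \<longleftrightarrow> (\<exists>t. sg s t \<and> x \<in> Xs (iv t))"
proof
  assume "x \<in> D (cl (iv s))"
  then obtain v where v: "sg (iv s) v" "x \<in> Xs v" unfolding memD by blast
  have "sg s (iv v)" using sg_iv[OF v(1)] s by simp
  moreover have "x \<in> Xs (iv (iv v))" using v sg_S by simp
  ultimately show "\<exists>t. sg s t \<and> x \<in> Xs (iv t)" by blast
next
  assume "\<exists>t. sg s t \<and> x \<in> Xs (iv t)"
  then obtain t where "sg s t" "x \<in> Xs (iv t)" by blast
  then show "x \<in> D (cl (iv s))" unfolding memD using sg_iv by blast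
qed

lemma part3: assumes s: "s\<in>S" shows "bij_betw (al (cl s)) (D (cl (iv s))) (D (cl s))"
  unfolding bij_betw_def
proof (intro conjI)
  show "inj_on (al (cl s)) (D (cl (iv s)))"
  proof (rule inj_onI)
    fix x y assume x: "x \<in> D (cl (iv s))" and y: "y \<in> D (cl (iv s))" and eq: "al (cl s) x = al (cl s) y"
    obtain t where t: "sg s t" "x \<in> Xs (iv t)" using x memDi s by blast
    obtain u where u: "sg s u" "y \<in> Xs (iv u)" using y memDi s by blast
    have tS: "t\<in>S" and uS: "u\<in>S" using t u sg_S by auto
    have z: "th t x = th u y" using eq part2 s t u by metis
    have zt: "th t x \<in> Xs t" using th_maps tS t by blast
    have zu: "th t x \<in> Xs u" using th_maps uS u z by metis
    have tu: "sg (iv t) (iv u)" using sg_iv sg_trans sg_sym t u by blast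
    have "th (iv t) (th t x) = th (iv u) (th t x)" using part1[OF tu] zt zu tS uS by simp
    then show "x = y" using th_inv1 tS uS t u z by metis
  qed
  show "al (cl s) ` D (cl (iv s)) = D (cl s)"
  proof
    show "al (cl s) ` D (cl (iv s)) \<subseteq> D (cl s)"
    proof
      fix z assume "z \<in> al (cl s) ` D (cl (iv s))"
      then obtain x where x: "x \<in> D (cl (iv s))" "z = al (cl s) x" by blast
      obtain t where t: "sg s t" "x \<in> Xs (iv t)" using x memDi s by blast
      have "z = th t x" using part2 s t x by metis
      then have "z \<in> Xs t" using th_maps t sg_S by blast
      then show "z \<in> D (cl s)" using memD t by blast
    qed
    show "D (cl s) \<subseteq> al (cl s) ` D (cl (iv s))"
    proof
      fix z assume "z \<in> D (cl s)"
      then obtain u where u: "sg s u" "z \<in> Xs u" using memD by blast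
      have uS: "u\<in>S" using u sg_S by blast
      have xu: "th (iv u) z \<in> Xs (iv u)" using th_maps[of "iv u" z] uS u by simp
      have "al (cl s) (th (iv u) z) = th u (th (iv u) z)" using part2 s u xu by blast
      also have "\<dots> = z" using th_inv2 uS u by blast
      finally have "z = al (cl s) (th (iv u) z)" by simp
      moreover have "th (iv u) z \<in> D (cl (iv s))" using memDi s u xu by blast
      ultimately show "z \<in> al (cl s) ` D (cl (iv s))" by blast
    qed
  qed
qed

abbreviation "QA \<equiv> q_arrows S d c m"

lemma QA_E: "P \<in> QA \<Longrightarrow> \<exists>s\<in>S. P = cl s" unfolding q_arrows_def by blast
lemma QA_I: "s\<in>S \<Longrightarrow> cl s \<in> QA" unfolding q_arrows_def by blast

lemma D_X: "D (cl s) \<subseteq> X" using memD sg_S Xs_X by blast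

lemma qpa1: "\<forall>P\<in>QA. D P \<subseteq> X \<and> bij_betw (al P) (D (q_inv S d c m P)) (D P)"
proof
  fix P assume "P \<in> QA"
  then obtain s where s: "s\<in>S" "P = cl s" using QA_E by blast
  show "D P \<subseteq> X \<and> bij_betw (al P) (D (q_inv S d c m P)) (D P)"
    using D_X part3 q_inv_cl s by simp
qed

lemma qpa2: "\<forall>P\<in>QA. (\<forall>x\<in>D (q_inv S d c m P). al (q_inv S d c m P) (al P x) = x) \<and> (\<forall>x\<in>D P. al P (al (q_inv S d c m P) x) = x)"
proof
  fix P assume "P \<in> QA"
  then obtain s where s: "s\<in>S" "P = cl s" using QA_E by blast
  have qi: "q_inv S d c m P = cl (iv s)" using q_inv_cl s by simp
  show "(\<forall>x\<in>D (q_inv S d c m P). al (q_inv S d c m P) (al P x) = x) \<and> (\<forall>x\<in>D P. al P (al (q_inv S d c m P) x) = x)"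
  proof (intro conjI ballI)
    fix x assume "x \<in> D (q_inv S d c m P)"
    then obtain t where t: "sg s t" "x \<in> Xs (iv t)" using memDi s qi by auto
    have tS: "t \<in> S" using t sg_S by blast
    have 1: "al P x = th t x" using part2 s t by blast
    have 2: "th t x \<in> Xs (iv (iv t))" using th_maps tS t by simp
    have "al (cl (iv s)) (th t x) = th (iv t) (th t x)" using part2[of "iv s" "iv t"] s sg_iv t 2 by simp
    then show "al (q_inv S d c m P) (al P x) = x" using qi 1 th_inv1 tS t by simp
  next
    fix x assume "x \<in> D P"
    then obtain t where t: "sg s t" "x \<in> Xs t" using memD s by auto
    have tS: "t \<in> S" using t sg_S by blast
    have 1: "al (cl (iv s)) x = th (iv t) x" using part2[of "iv s" "iv t"] s sg_iv t tS by simp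
    have 2: "th (iv t) x \<in> Xs (iv t)" using th_maps[of "iv t"] tS t by simp
    have "al (cl s) (th (iv t) x) = th t (th (iv t) x)" using part2 s t 2 by blast
    then show "al P (al (q_inv S d c m P) x) = x" using qi 1 th_inv2 tS t s by simp
  qed
qed

lemma qpa3: "X = (\<Union>P\<in>QA. D P)"
proof
  show "X \<subseteq> (\<Union>P\<in>QA. D P)"
  proof
    fix x assume "x \<in> X"
    then obtain s where s: "s\<in>S" "x \<in> Xs s" using X_un by blast
    then have "x \<in> D (cl s)" using memD sg_refl by blast
    then show "x \<in> (\<Union>P\<in>QA. D P)" using QA_I s by blast
  qed
  show "(\<Union>P\<in>QA. D P) \<subseteq> X" using D_X QA_E by blast
qed

lemma qpa4: "\<forall>P\<in>QA. \<forall>R\<in>QA. q_d d P = q_d c R \<longrightarrow>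
        (\<forall>x. x \<in> D (q_inv S d c m R) \<and> al R x \<in> D (q_inv S d c m P) \<longrightarrow>
              x \<in> D (q_inv S d c m (q_mult S d c m P R)) \<and> al (q_mult S d c m P R) x = al P (al R x))"
proof (intro ballI impI allI)
  fix P R x assume P: "P \<in> QA" and R: "R \<in> QA" and dc: "q_d d P = q_d c R"
    and x: "x \<in> D (q_inv S d c m R) \<and> al R x \<in> D (q_inv S d c m P)"
  obtain p where p: "p\<in>S" "P = cl p" using QA_E P by blast
  obtain r where r: "r\<in>S" "R = cl r" using QA_E R by blast
  have pr: "d p = c r" using dc p r q_d_cl by simp
  obtain t where t: "sg r t" "x \<in> Xs (iv t)" using memDi r x q_inv_cl by auto
  have tS: "t\<in>S" using t sg_S by blast
  have 1: "al R x = th t x" using part2 r t by blast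
  obtain u where u: "sg p u" "th t x \<in> Xs (iv u)" using memDi p x q_inv_cl 1 by auto
  have uS: "u\<in>S" using u sg_S by blast
  have ut: "d u = c t" using pr t u sg_S by metis
  have C: "x \<in> Xs (iv (m u t)) \<and> th (m u t) x = th u (th t x)" using comp uS tS ut t u by blast
  have mq: "q_mult S d c m P R = cl (m p r)" using q_mult_cl p r pr by simp
  have prS: "m p r \<in> S" using p r pr by simp
  have cg: "sg (m p r) (m u t)" using sg_cong t u pr by blast
  show "x \<in> D (q_inv S d c m (q_mult S d c m P R)) \<and> al (q_mult S d c m P R) x = al P (al R x)"
  proof
    show "x \<in> D (q_inv S d c m (q_mult S d c m P R))" using mq q_inv_cl[OF prS] memDi[OF prS] cg C by auto
    have "al (cl (m p r)) x = th (m u t) x" using part2 prS cg C by blast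
    moreover have "al P (th t x) = th u (th t x)" using part2 p u by blast
    ultimately show "al (q_mult S d c m P R) x = al P (al R x)" using mq 1 C by simp
  qed
qed

lemma qpa5: "\<forall>P R. nleq QA (q_d d) (q_d c) (q_mult S d c m) P R \<longrightarrow> D P \<subseteq> D R"
proof (intro allI impI)
  fix P R assume "nleq QA (q_d d) (q_d c) (q_mult S d c m) P R"
  then obtain E where R: "R \<in> QA" and E: "idem QA (q_d d) (q_d c) (q_mult S d c m) E"
    and dc: "q_d d R = q_d c E" and PE: "P = q_mult S d c m R E" unfolding nleq_def by blast
  obtain r where r: "r\<in>S" "R = cl r" using QA_E R by blast
  obtain e where e: "e\<in>S" "E = cl e" using QA_E E unfolding idem_def by blast
  have de: "d e = c e" using E e q_d_cl unfolding idem_def by simp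
  have "q_mult S d c m E E = E" using E unfolding idem_def by blast
  then have "cl (m e e) = cl e" using q_mult_cl e de by simp
  moreover have "m e e \<in> cl (m e e)" unfolding sclass_def using sg_refl e de by simp
  ultimately have ee: "sg e (m e e)" unfolding sclass_def by simp
  have 1: "sg (m (iv e) (m e e)) (m (iv e) e)"
    using sg_cong[OF sg_refl[of "iv e"] sg_sym[OF ee]] e de by simp
  have sh: "m (m (iv e) e) e = m e (m (iv e) (m (m (iv e) e) e))" "ide (m (iv e) (m (m (iv e) e) e))"
    by (rule shift; use e de ss_ide in auto)+
  have "leq (m e (m (iv e) (m (m (iv e) e) e))) e" by (rule leqI) (use e de sh in auto)
  then have 2: "sg (m (iv e) (m e e)) e" using sh(1) e de leq_sg sg_sym by simp
  have "sg e (m (iv e) e)" using sg_trans[OF sg_sym[OF 2] 1] .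
  then have ie: "ide e" using eu2 e ss_ide by blast
  have dr: "d r = c e" using dc r e q_d_cl by simp
  have "P = cl (m r e)" using PE r e q_mult_cl dr by simp
  also have "\<dots> = cl r" using sclass_eq leq_sg leqI r ie dr by blast
  finally show "D P \<subseteq> D R" using r by simp
qed

lemma qpa: "partial_action QA (q_d d) (q_d c) (q_mult S d c m) (q_inv S d c m) X D al"
  unfolding partial_action_def using qpa1 qpa2 qpa3 qpa4 qpa5 by blast

lemma qoa: "ordered_action QA (q_inv S d c m) X D al"
  unfolding ordered_action_def
proof
  fix P assume "P \<in> QA"
  then obtain s where s: "s\<in>S" "P = cl s" using QA_E by blast
  have qi: "q_inv S d c m P = cl (iv s)" using q_inv_cl s by simp
  show "order_ideal X (D P) \<and> order_iso_on (al P) (D (q_inv S d c m P)) (D P)"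
  proof
    show "order_ideal X (D P)" unfolding order_ideal_def
    proof (intro conjI ballI impI)
      show "D P \<subseteq> X" using D_X s by simp
      fix y x assume y: "y \<in> D P" and x: "x \<in> X" and xy: "x \<le> y"
      obtain t where t: "sg s t" "y \<in> Xs t" using memD s y by auto
      have "x \<in> Xs t" using oideal[of t] t sg_S x xy unfolding order_ideal_def by blast
      then show "x \<in> D P" using memD s t by blast
    qed
    show "order_iso_on (al P) (D (q_inv S d c m P)) (D P)" unfolding order_iso_on_def
    proof (intro conjI ballI)
      show "bij_betw (al P) (D (q_inv S d c m P)) (D P)" using part3 s qi by simp
      fix x y assume x: "x \<in> D (q_inv S d c m P)" and y: "y \<in> D (q_inv S d c m P)"
      obtain t where t: "sg s t" "x \<in> Xs (iv t)" using memDi s x qi by auto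
      obtain u where u: "sg s u" "y \<in> Xs (iv u)" using memDi s y qi by auto
      have tS: "t\<in>S" and uS: "u\<in>S" using t u sg_S by auto
      have ax: "al P x = th t x" using part2 s t by blast
      have ay: "al P y = th u y" using part2 s u by blast
      have isou: "\<forall>a\<in>Xs (iv u). \<forall>b\<in>Xs (iv u). a \<le> b \<longleftrightarrow> th u a \<le> th u b"
        using oiso[OF uS] unfolding order_iso_on_def by blast
      have xX: "x \<in> X" using Xs_X[of "iv t"] tS t by auto
      show "x \<le> y \<longleftrightarrow> al P x \<le> al P y"
      proof
        assume xy: "x \<le> y"
        have xu: "x \<in> Xs (iv u)" using oideal[of "iv u"] uS u xX xy unfolding order_ideal_def by auto
        have "al P x = th u x" using part2 s u xu by blast
        then show "al P x \<le> al P y" using isou xu u xy ay by simp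
      next
        assume le: "al P x \<le> al P y"
        have zt: "th t x \<in> Xs t" using th_maps tS t by blast
        have zX: "th t x \<in> X" using Xs_X tS zt by blast
        have "th u y \<in> Xs u" using th_maps uS u by blast
        then have zu: "th t x \<in> Xs u" using oideal[OF uS] zX le ax ay unfolding order_ideal_def by auto
        have tu: "sg (iv t) (iv u)" using sg_iv sg_trans sg_sym t u by blast
        have "th (iv t) (th t x) = th (iv u) (th t x)" using part1[OF tu] zt zu tS uS by simp
        then have xe: "x = th (iv u) (th t x)" using th_inv1 tS t by simp
        have xu: "x \<in> Xs (iv u)" using th_maps[of "iv u" "th t x"] uS zu xe by simp
        have "th u x = th t x" using xe th_inv2 uS zu by metis
        then have "th u x \<le> th u y" using le ax ay by simp
        then show "x \<le> y" using isou xu u by blast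
      qed
    qed
  qed
qed

end

theorem mainTheorem13:
  fixes S :: "'a set" and S0 :: "'o set" and d c :: "'a \<Rightarrow> 'o" and m :: "'a \<Rightarrow> 'a \<Rightarrow> 'a"
    and X :: "'x::order set" and Xs :: "'a \<Rightarrow> 'x set" and th :: "'a \<Rightarrow> 'x \<Rightarrow> 'x"
  assumes "inv_semigroupoid S S0 d c m"
    and "E_unitary S d c m"
    and "global_action S d c m (sinv S d c m) X Xs th"
    and "ordered_action S (sinv S d c m) X Xs th"
  shows "(\<forall>s t x. sigma S d c m s t \<longrightarrow>
            x \<in> Xs (sinv S d c m s) \<longrightarrow> x \<in> Xs (sinv S d c m t) \<longrightarrow> th s x = th t x)
    \<and> (\<forall>s\<in>S. \<forall>t x. sigma S d c m s t \<longrightarrow> x \<in> Xs (sinv S d c m t) \<longrightarrow>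
            alphaMap S d c m Xs th (sclass S d c m s) x = th t x)
    \<and> (\<forall>s\<in>S. bij_betw (alphaMap S d c m Xs th (sclass S d c m s))
            (alphaD Xs (sclass S d c m (sinv S d c m s))) (alphaD Xs (sclass S d c m s)))
    \<and> partial_action (q_arrows S d c m) (q_d d) (q_d c) (q_mult S d c m) (q_inv S d c m)
        X (alphaD Xs) (alphaMap S d c m Xs th)
    \<and> ordered_action (q_arrows S d c m) (q_inv S d c m) X (alphaD Xs) (alphaMap S d c m Xs th)
    \<and> (\<forall>s\<in>S. \<forall>x\<in>Xs (sinv S d c m s). alphaMap S d c m Xs th (sclass S d c m s) x = th s x)"
proof -
  interpret ctx2 S S0 d c m X Xs th
    by unfold_locales (use assms in auto)
  show ?thesis
    using part1 part2 part3 qpa qoa part2[OF _ sg_refl] by blast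
qed

end
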